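(* Let $V$ be a module over a commutative ring $k$, let $[\cdot,\cdot]:V\times V\to V$ be a bilinear map such that $(V,[\cdot,\cdot])$ is a Lie algebra (i.e. $[x,x]=0$ and $\circlearrowleft_{x,y,z}[x,[y,z]]=0$ for all $x,y,z\in V$), and let $\alpha:V\to V$ be a linear map. Then: (1) if $(V,[\cdot,\cdot],\alpha)$ is a Hom-Lie algebra of type $I_2$, it is also a Hom-Lie algebra of type $I_1$; (2) if $(V,[\cdot,\cdot],\alpha)$ is a Hom-Lie algebra of type $II_2$, it is also a Hom-Lie algebra of type $II_1$.
   Context: For $x,y,z\in V$, $\circlearrowleft_{x,y,z} F(x,y,z)$ denotes $F(x,y,z)+F(y,z,x)+F(z,x,y)$. A triple $(V,[\cdot,\cdot],\alpha)$ with $V$ a $k$-module, $[\cdot,\cdot]$ bilinear with $[x,x]=0$ for all $x$, and $\alpha$ linear, is a Hom-Lie algebra of a given type if the corresponding identity holds for all $x,y,z\in V$: type $I_1$: $\circlearrowleft_{x,y,z}[\alpha(x),[y,z]]=0$; type $I_2$: $\circlearrowleft_{x,y,z}[x,[\alpha(y),z]]=0$; type $I_3$: $\circlearrowleft_{x,y,z}[x,[y,\alpha(z)]]=0$; type $II$: $\circlearrowleft_{x,y,z}[x,\alpha([y,z])]=0$; type $II_1$: $\circlearrowleft_{x,y,z}[x,[\alpha(y),\alpha(z)]]=0$; type $II_2$: $\circlearrowleft_{x,y,z}[\alpha(x),[y,\alpha(z)]]=0$; type $II_3$: $\circlearrowleft_{x,y,z}[\alpha(x),[\alpha(y),z]]=0$.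 *)

theory Defs
  imports Main "HOL.Modules"
begin

definition cyc :: "('v \<Rightarrow> 'v \<Rightarrow> 'v \<Rightarrow> 'w::plus) \<Rightarrow> 'v \<Rightarrow> 'v \<Rightarrow> 'v \<Rightarrow> 'w" where
  "cyc F x y z = F x y z + F y z x + F z x y"

definition bilinear_map :: "('k::comm_ring_1 \<Rightarrow> 'v::ab_group_add \<Rightarrow> 'v) \<Rightarrow> ('v \<Rightarrow> 'v \<Rightarrow> 'v) \<Rightarrow> bool" where
  "bilinear_map scale br \<longleftrightarrow>
     (\<forall>y. module_hom scale scale (\<lambda>x. br x y)) \<and> (\<forall>x. module_hom scale scale (\<lambda>y. br x y))"

definition alternating :: "('v \<Rightarrow> 'v \<Rightarrow> 'v::zero) \<Rightarrow> bool" where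
  "alternating br \<longleftrightarrow> (\<forall>x. br x x = 0)"

definition is_lie_algebra :: "('k::comm_ring_1 \<Rightarrow> 'v::ab_group_add \<Rightarrow> 'v) \<Rightarrow> ('v \<Rightarrow> 'v \<Rightarrow> 'v) \<Rightarrow> bool" where
  "is_lie_algebra scale br \<longleftrightarrow> bilinear_map scale br \<and> alternating br \<and>
     (\<forall>x y z. cyc (\<lambda>x y z. br x (br y z)) x y z = 0)"

definition hom_lie_I1 :: "('v \<Rightarrow> 'v \<Rightarrow> 'v::ab_group_add) \<Rightarrow> ('v \<Rightarrow> 'v) \<Rightarrow> bool" where
  "hom_lie_I1 br \<alpha> \<longleftrightarrow> alternating br \<and> (\<forall>x y z. cyc (\<lambda>x y z. br (\<alpha> x) (br y z)) x y z = 0)"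

definition hom_lie_I2 :: "('v \<Rightarrow> 'v \<Rightarrow> 'v::ab_group_add) \<Rightarrow> ('v \<Rightarrow> 'v) \<Rightarrow> bool" where
  "hom_lie_I2 br \<alpha> \<longleftrightarrow> alternating br \<and> (\<forall>x y z. cyc (\<lambda>x y z. br x (br (\<alpha> y) z)) x y z = 0)"

definition hom_lie_II1 :: "('v \<Rightarrow> 'v \<Rightarrow> 'v::ab_group_add) \<Rightarrow> ('v \<Rightarrow> 'v) \<Rightarrow> bool" where
  "hom_lie_II1 br \<alpha> \<longleftrightarrow> alternating br \<and> (\<forall>x y z. cyc (\<lambda>x y z. br x (br (\<alpha> y) (\<alpha> z))) x y z = 0)"

definition hom_lie_II2 :: "('v \<Rightarrow> 'v \<Rightarrow> 'v::ab_group_add) \<Rightarrow> ('v \<Rightarrow> 'v) \<Rightarrow> bool" where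
  "hom_lie_II2 br \<alpha> \<longleftrightarrow> alternating br \<and> (\<forall>x y z. cyc (\<lambda>x y z. br (\<alpha> x) (br y (\<alpha> z))) x y z = 0)"

end

theory Submission
  imports Defs
begin

theorem proposition1p1:
  fixes scale :: "'k::comm_ring_1 \<Rightarrow> 'v::ab_group_add \<Rightarrow> 'v"
    and br :: "'v \<Rightarrow> 'v \<Rightarrow> 'v"
    and \<alpha> :: "'v \<Rightarrow> 'v"
  assumes "module scale"
    and "is_lie_algebra scale br"
    and "module_hom scale scale \<alpha>"
  shows "(hom_lie_I2 br \<alpha> \<longrightarrow> hom_lie_I1 br \<alpha>) \<and> (hom_lie_II2 br \<alpha> \<longrightarrow> hom_lie_II1 br \<alpha>)"
proof -
  have L: "bilinear_map scale br" "alternating br"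
    and J: "\<And>x y z. br x (br y z) + br y (br z x) + br z (br x y) = 0"
    using assms(2) unfolding is_lie_algebra_def cyc_def by auto
  have add1: "\<And>a b c. br (a+b) c = br a c + br b c"
    using L(1) unfolding bilinear_map_def by (meson module_hom.add)
  have add2: "\<And>a b c. br a (b+c) = br a b + br a c"
    using L(1) unfolding bilinear_map_def by (meson module_hom.add)
  have neg2: "\<And>a b. br a (- b) = - br a b"
    using L(1) unfolding bilinear_map_def by (meson module_hom.neg)
  have alt: "\<And>a. br a a = 0" using L(2) unfolding alternating_def by auto
  have anti: "\<And>a b. br a b = - br b a"
  proof -
    fix a b
    have "br (a+b) (a+b) = (br a a + br b a) + (br a b + br b b)" by (simp only: add1 add2)
    hence "br a b + br b a = 0" using alt[of "a+b"] alt[of a] alt[of b] by (simp add: add.commute)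
    thus "br a b = - br b a" by (simp add: eq_neg_iff_add_eq_0)
  qed
  have P1: "hom_lie_I1 br \<alpha>" if h: "hom_lie_I2 br \<alpha>"
  proof -
    have H: "\<And>x y z. br x (br (\<alpha> y) z) + br y (br (\<alpha> z) x) + br z (br (\<alpha> x) y) = 0"
      using h unfolding hom_lie_I2_def cyc_def by auto
    { fix x y z
      have e: "\<And>a b c. br (\<alpha> a) (br b c) = br b (br (\<alpha> a) c) - br c (br (\<alpha> a) b)"
      proof -
        fix a b c
        have "br (\<alpha> a) (br b c) + br b (br c (\<alpha> a)) + br c (br (\<alpha> a) b) = 0" by (rule J)
        moreover have "br b (br c (\<alpha> a)) = - br b (br (\<alpha> a) c)"
          by (subst anti[of c], simp add: neg2)
        ultimately show "br (\<alpha> a) (br b c) = br b (br (\<alpha> a) c) - br c (br (\<alpha> a) b)"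
          by (simp add: algebra_simps eq_neg_iff_add_eq_0)
      qed
      have "cyc (\<lambda>x y z. br (\<alpha> x) (br y z)) x y z
         = (br y (br (\<alpha> x) z) + br z (br (\<alpha> y) x) + br x (br (\<alpha> z) y))
           - (br z (br (\<alpha> x) y) + br x (br (\<alpha> y) z) + br y (br (\<alpha> z) x))"
        unfolding cyc_def e by (simp add: algebra_simps)
      also have "\<dots> = 0" using H[of y x z] H[of x y z] by (simp add: algebra_simps)
      finally have "cyc (\<lambda>x y z. br (\<alpha> x) (br y z)) x y z = 0" .
    }
    thus ?thesis using L(2) unfolding hom_lie_I1_def by auto
  qed
  have P2: "hom_lie_II1 br \<alpha>" if h: "hom_lie_II2 br \<alpha>"
  proof -
    have H: "\<And>x y z. br (\<alpha> x) (br y (\<alpha> z)) + br (\<alpha> y) (br z (\<alpha> x)) + br (\<alpha> z) (br x (\<alpha> y)) = 0"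
      using h unfolding hom_lie_II2_def cyc_def by auto
    { fix x y z
      have e: "\<And>a b c. br a (br (\<alpha> b) (\<alpha> c)) = - br (\<alpha> b) (br (\<alpha> c) a) - br (\<alpha> c) (br a (\<alpha> b))"
        using J by (metis add.assoc add_eq_0_iff diff_conv_add_uminus minus_add_distrib)
      have f: "\<And>a b c. br (\<alpha> b) (br (\<alpha> c) a) = - br (\<alpha> b) (br a (\<alpha> c))"
        by (subst anti, simp add: neg2)
      have "cyc (\<lambda>x y z. br x (br (\<alpha> y) (\<alpha> z))) x y z
         = (br (\<alpha> y) (br x (\<alpha> z)) + br (\<alpha> x) (br z (\<alpha> y)) + br (\<alpha> z) (br y (\<alpha> x)))
           - (br (\<alpha> z) (br x (\<alpha> y)) + br (\<alpha> x) (br y (\<alpha> z)) + br (\<alpha> y) (br z (\<alpha> x)))"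
        unfolding cyc_def e f by (simp add: algebra_simps)
      also have "\<dots> = 0" using H[of y x z] H[of x y z] by (simp add: algebra_simps)
      finally have "cyc (\<lambda>x y z. br x (br (\<alpha> y) (\<alpha> z))) x y z = 0" .
    }
    thus ?thesis using L(2) unfolding hom_lie_II1_def by auto
  qed
  show ?thesis using P1 P2 by auto
qed

end
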